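(* Let $h$ be a hive which is a vertex (extreme point) of the polytope of all hives having the same border labels as $h$, and suppose every flatspace of $h$ is a small triangle or a small rhombus. Then for every hive vertex $v\in H$, the label $h(v)$ is an integer linear combination of the border labels $h(b)$, $b\in B$.
   Context: Fix $n\ge1$. Hive vertices: $H=\{(p,q)\in\mathbb{Z}^2:p,q\ge0,\ p+q\le n\}$, placed in the plane at $p(1,0)+q(1/2,\sqrt3/2)$, forming a big triangle subdivided into $n^2$ small unit triangles. A rhombus is the union of two small triangles sharing an edge; for integers $p,q\ge0$ with $p+q\le n-2$ the rhombus inequalities are $h(p+1,q)+h(p,q+1)\ge h(p,q)+h(p+1,q+1)$, $h(p+1,q)+h(p+1,q+1)\ge h(p,q+1)+h(p+2,q)$, $h(p,q+1)+h(p+1,q+1)\ge h(p+1,q)+h(p,q+2)$ (obtuse-vertex sum $\ge$ acute-vertex sum). A hive is $h:H\to\mathbb{R}$ satisfying all of them. Border $B$: vertices with $p=0$, $q=0$ or $p+q=n$; the set of hives with prescribed values on $B$ is a compact polytope. A rhombus is flat if its inequality holds with equality. Flatspaces are the unions of small triangles in the classes of the equivalence relation generated by "share an edge and form a flat rhombus"; a small rhombus flatspace is one consisting of exactly two small triangles. *)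

theory Defs
  imports Main "HOL.Real"
begin

text \<open>Labelings are functions
  nat \<times> nat \<Rightarrow> real; only their values on H n matter, and the polytope
  below consists of labelings vanishing outside H n (so it is a copy of R^H).\<close>

definition hive_vertices :: "nat \<Rightarrow> (nat \<times> nat) set" where
  "hive_vertices n = {(p, q). p + q \<le> n}"

definition border :: "nat \<Rightarrow> (nat \<times> nat) set" where
  "border n = {(p, q). p + q \<le> n \<and> (p = 0 \<or> q = 0 \<or> p + q = n)}"

definition is_hive :: "nat \<Rightarrow> (nat \<times> nat \<Rightarrow> real) \<Rightarrow> bool" where
  "is_hive n h \<longleftrightarrow> (\<forall>p q. p + q + 2 \<le> n \<longrightarrow>
       h (p+1, q) + h (p, q+1) \<ge> h (p, q) + h (p+1, q+1) \<and>
       h (p+1, q) + h (p+1, q+1) \<ge> h (p, q+1) + h (p+2, q) \<and>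
       h (p, q+1) + h (p+1, q+1) \<ge> h (p+1, q) + h (p, q+2))"

definition hive_polytope :: "nat \<Rightarrow> (nat \<times> nat \<Rightarrow> real) \<Rightarrow> (nat \<times> nat \<Rightarrow> real) set" where
  "hive_polytope n h = {g. is_hive n g \<and> (\<forall>v. v \<notin> hive_vertices n \<longrightarrow> g v = 0)
                          \<and> (\<forall>b \<in> border n. g b = h b)}"

definition extreme_pt :: "('a \<Rightarrow> real) \<Rightarrow> ('a \<Rightarrow> real) set \<Rightarrow> bool" where
  "extreme_pt x S \<longleftrightarrow> x \<in> S \<and>
     (\<forall>a \<in> S. \<forall>b \<in> S. \<forall>t::real. 0 < t \<and> t < 1 \<and> x = (\<lambda>v. t * a v + (1 - t) * b v) \<longrightarrow> a = b)"

text \<open>Small triangles: Up p q has vertices (p,q),(p+1,q),(p,q+1);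
  Down p q has vertices (p+1,q),(p,q+1),(p+1,q+1).\<close>
datatype tri = Up nat nat | Down nat nat

definition small_triangles :: "nat \<Rightarrow> tri set" where
  "small_triangles n = {Up p q | p q. p + q + 1 \<le> n} \<union> {Down p q | p q. p + q + 2 \<le> n}"

text \<open>The three rhombi
  at (p,q) are Up p q \<union> Down p q, Down p q \<union> Up (p+1) q, Down p q \<union> Up p (q+1),
  corresponding to the three rhombus inequalities in that order.\<close>
definition flat_adj :: "nat \<Rightarrow> (nat \<times> nat \<Rightarrow> real) \<Rightarrow> tri \<Rightarrow> tri \<Rightarrow> bool" where
  "flat_adj n h T U \<longleftrightarrow> (\<exists>p q. p + q + 2 \<le> n \<and> T = Down p q \<and>
      ((U = Up p q \<and> h (p+1, q) + h (p, q+1) = h (p, q) + h (p+1, q+1)) \<or>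
       (U = Up (p+1) q \<and> h (p+1, q) + h (p+1, q+1) = h (p, q+1) + h (p+2, q)) \<or>
       (U = Up p (q+1) \<and> h (p, q+1) + h (p+1, q+1) = h (p+1, q) + h (p, q+2))))"

definition flat_equiv :: "nat \<Rightarrow> (nat \<times> nat \<Rightarrow> real) \<Rightarrow> tri \<Rightarrow> tri \<Rightarrow> bool" where
  "flat_equiv n h = (\<lambda>T U. flat_adj n h T U \<or> flat_adj n h U T)\<^sup>*\<^sup>*"

definition flatspaces :: "nat \<Rightarrow> (nat \<times> nat \<Rightarrow> real) \<Rightarrow> tri set set" where
  "flatspaces n h = {{U \<in> small_triangles n. flat_equiv n h T U} | T. T \<in> small_triangles n}"

end

theory Submission
  imports Defs
begin

definition Mset :: "nat \<Rightarrow> (nat \<times> nat \<Rightarrow> real) \<Rightarrow> real set" where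
  "Mset n h = {y. \<exists>c :: nat \<times> nat \<Rightarrow> int. y = (\<Sum>b \<in> border n. of_int (c b) * h b)}"

lemma finite_border: "finite (border n)"
proof -
  have "border n \<subseteq> {..n} \<times> {..n}" by (auto simp: border_def)
  then show ?thesis by (rule finite_subset) auto
qed

lemma M_intro: "y = (\<Sum>b \<in> border n. of_int (c b) * h b) \<Longrightarrow> y \<in> Mset n h"
  unfolding Mset_def by blast

lemma M_add: "x \<in> Mset n h \<Longrightarrow> y \<in> Mset n h \<Longrightarrow> x + y \<in> Mset n h"
proof -
  assume "x \<in> Mset n h" "y \<in> Mset n h"
  then obtain c1 c2 where "x = (\<Sum>b \<in> border n. of_int (c1 b) * h b)" "y = (\<Sum>b \<in> border n. of_int (c2 b) * h b)"
    by (auto simp: Mset_def)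
  then have "x + y = (\<Sum>b \<in> border n. of_int (c1 b + c2 b) * h b)"
    by (simp add: sum.distrib distrib_right)
  then show ?thesis by (rule M_intro)
qed

lemma M_neg: "x \<in> Mset n h \<Longrightarrow> - x \<in> Mset n h"
proof -
  assume "x \<in> Mset n h"
  then obtain c1 where "x = (\<Sum>b \<in> border n. of_int (c1 b) * h b)"
    by (auto simp: Mset_def)
  then have "- x = (\<Sum>b \<in> border n. of_int (- c1 b) * h b)"
    by (simp add: sum_negf)
  then show ?thesis by (rule M_intro)
qed

lemma M_diff: "x \<in> Mset n h \<Longrightarrow> y \<in> Mset n h \<Longrightarrow> x - y \<in> Mset n h"
  using M_add[of x n h "-y"] M_neg[of y n h] by simp

lemma M_zero: "0 \<in> Mset n h"
  unfolding Mset_def by (rule CollectI, rule exI[of _ "\<lambda>_. 0"]) simp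

lemma M_sum: "finite A \<Longrightarrow> (\<And>a. a \<in> A \<Longrightarrow> f a \<in> Mset n h) \<Longrightarrow> sum f A \<in> Mset n h"
  by (induction A rule: finite_induct) (auto intro: M_add M_zero)

lemma M_border: "b \<in> border n \<Longrightarrow> h b \<in> Mset n h"
proof -
  assume b: "b \<in> border n"
  have "(\<Sum>b' \<in> border n. of_int (if b' = b then 1 else 0) * h b') = h b"
  proof -
    have "(\<Sum>b' \<in> border n. of_int (if b' = b then 1 else 0) * h b') = (\<Sum>b' \<in> border n. if b' = b then h b else 0)"
      by (rule sum.cong) auto
    also have "\<dots> = h b" using b finite_border[of n] by simp
    finally show ?thesis .
  qed
  then show ?thesis by (intro M_intro) (rule sym)
qed

definition rf :: "nat \<Rightarrow> nat \<Rightarrow> nat \<Rightarrow> (nat \<times> nat \<Rightarrow> real) \<Rightarrow> real" where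
  "rf k p q g = (if k = 0 then g (p+1,q) + g (p,q+1) - g (p,q) - g (p+1,q+1)
     else if k = 1 then g (p+1,q) + g (p+1,q+1) - g (p,q+1) - g (p+2,q)
     else g (p,q+1) + g (p+1,q+1) - g (p+1,q) - g (p,q+2))"

lemma k3: "k < (3::nat) \<Longrightarrow> k = 0 \<or> k = 1 \<or> k = 2" by arith

lemma is_hive_rf: "is_hive n g \<longleftrightarrow> (\<forall>p q k. p+q+2 \<le> n \<longrightarrow> k < 3 \<longrightarrow> 0 \<le> rf k p q g)"
proof
  assume "is_hive n g"
  show "\<forall>p q k. p+q+2 \<le> n \<longrightarrow> k < 3 \<longrightarrow> 0 \<le> rf k p q g"
  proof (intro allI impI)
    fix p q k :: nat assume pq: "p+q+2 \<le> n" and k: "k < 3"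
    from \<open>is_hive n g\<close> pq have H: "g (p+1, q) + g (p, q+1) \<ge> g (p, q) + g (p+1, q+1) \<and>
       g (p+1, q) + g (p+1, q+1) \<ge> g (p, q+1) + g (p+2, q) \<and>
       g (p, q+1) + g (p+1, q+1) \<ge> g (p+1, q) + g (p, q+2)" unfolding is_hive_def by blast
    have "rf 0 p q g = g (p+1,q) + g (p,q+1) - g (p,q) - g (p+1,q+1)"
      "rf 1 p q g = g (p+1,q) + g (p+1,q+1) - g (p,q+1) - g (p+2,q)"
      "rf 2 p q g = g (p,q+1) + g (p+1,q+1) - g (p+1,q) - g (p,q+2)" by (simp_all add: rf_def)
    with H k3[OF k] show "0 \<le> rf k p q g" by auto
  qed
next
  assume a: "\<forall>p q k. p+q+2 \<le> n \<longrightarrow> k < 3 \<longrightarrow> 0 \<le> rf k p q g"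
  show "is_hive n g" unfolding is_hive_def
  proof (intro allI impI)
    fix p q assume "p+q+2 \<le> n"
    with a have "0 \<le> rf 0 p q g" "0 \<le> rf 1 p q g" "0 \<le> rf 2 p q g" by auto
    moreover have "rf 0 p q g = g (p+1,q) + g (p,q+1) - g (p,q) - g (p+1,q+1)"
      "rf 1 p q g = g (p+1,q) + g (p+1,q+1) - g (p,q+1) - g (p+2,q)"
      "rf 2 p q g = g (p,q+1) + g (p+1,q+1) - g (p+1,q) - g (p,q+2)" by (simp_all add: rf_def)
    ultimately show "g (p+1, q) + g (p, q+1) \<ge> g (p, q) + g (p+1, q+1) \<and>
       g (p+1, q) + g (p+1, q+1) \<ge> g (p, q+1) + g (p+2, q) \<and>
       g (p, q+1) + g (p+1, q+1) \<ge> g (p+1, q) + g (p, q+2)" by linarith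
  qed
qed

lemma rf_lin: "rf k p q (\<lambda>v. h v + e * d v) = rf k p q h + e * rf k p q d"
  by (simp add: rf_def algebra_simps)

lemma rigid:
  assumes ext: "extreme_pt h (hive_polytope n h)"
    and dz: "\<forall>v. v \<notin> hive_vertices n \<or> v \<in> border n \<longrightarrow> d v = 0"
    and df: "\<forall>p q k. p+q+2 \<le> n \<longrightarrow> k < 3 \<longrightarrow> rf k p q h = 0 \<longrightarrow> rf k p q d = 0"
  shows "d = (\<lambda>_. 0)"
proof -
  have hP: "h \<in> hive_polytope n h" using ext unfolding extreme_pt_def by blast
  then have hh: "is_hive n h" and h0: "\<forall>v. v \<notin> hive_vertices n \<longrightarrow> h v = 0"
    unfolding hive_polytope_def by auto
  define R where "R = {(p,q,k). p+q+2 \<le> n \<and> k < (3::nat)}"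
  have finR: "finite R"
  proof -
    have "R \<subseteq> {..n} \<times> {..n} \<times> {..<3}" by (auto simp: R_def)
    then show ?thesis by (rule finite_subset) auto
  qed
  define P where "P = (\<lambda>(p,q,k). rf k p q h) ` (R \<inter> {(p,q,k). rf k p q h > 0})"
  have finP: "finite P" unfolding P_def using finR by auto
  define \<delta> where "\<delta> = Min (insert 1 P)"
  have dpos: "\<delta> > 0" unfolding \<delta>_def using finP by (auto simp: P_def)
  have dle: "\<delta> \<le> rf k p q h" if "(p,q,k) \<in> R" "rf k p q h > 0" for p q k
  proof -
    have "rf k p q h \<in> P" unfolding P_def using that by force
    then show ?thesis unfolding \<delta>_def using finP by auto
  qed
  define K where "K = 1 + (\<Sum>(p,q,k)\<in>R. \<bar>rf k p q d\<bar>)"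
  have Kb: "\<bar>rf k p q d\<bar> < K" if "(p,q,k) \<in> R" for p q k
  proof -
    have "\<bar>rf k p q d\<bar> \<le> (\<Sum>(p,q,k)\<in>R. \<bar>rf k p q d\<bar>)"
      using member_le_sum[OF that, of "\<lambda>(p,q,k). \<bar>rf k p q d\<bar>"] finR by auto
    then show ?thesis unfolding K_def by linarith
  qed
  have Kpos: "K > 0" unfolding K_def by (smt (verit) sum_nonneg case_prod_beta abs_ge_zero)
  define e where "e = \<delta> / K"
  have epos: "e > 0" unfolding e_def using dpos Kpos by simp
  have small: "e * \<bar>rf k p q d\<bar> < \<delta>" if "(p,q,k) \<in> R" for p q k
  proof -
    have "e * \<bar>rf k p q d\<bar> < e * K" using Kb[OF that] epos by simp
    also have "e * K = \<delta>" unfolding e_def using Kpos by simp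
    finally show ?thesis .
  qed
  have inP: "(\<lambda>v. h v + s * d v) \<in> hive_polytope n h" if s: "\<bar>s\<bar> = e" for s
  proof -
    have "is_hive n (\<lambda>v. h v + s * d v)"
      unfolding is_hive_rf rf_lin
    proof (intro allI impI)
      fix p q k :: nat assume pq: "p+q+2 \<le> n" and k: "k < 3"
      then have R: "(p,q,k) \<in> R" unfolding R_def by simp
      have ge: "rf k p q h \<ge> 0" using hh pq k unfolding is_hive_rf by blast
      show "0 \<le> rf k p q h + s * rf k p q d"
      proof (cases "rf k p q h = 0")
        case True then show ?thesis using df pq k by simp
      next
        case False
        then have "rf k p q h > 0" using ge by simp
        then have "\<delta> \<le> rf k p q h" using dle R by blast
        moreover have "\<bar>s * rf k p q d\<bar> < \<delta>" using small[OF R] s by (simp add: abs_mult)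
        ultimately show ?thesis by linarith
      qed
    qed
    then show ?thesis unfolding hive_polytope_def using h0 dz by auto
  qed
  have "(\<lambda>v. h v + e * d v) = (\<lambda>v. h v + (- e) * d v)"
    using ext inP[of e] inP[of "-e"] epos unfolding extreme_pt_def
    apply (elim conjE)
    apply (drule bspec[of _ _ "\<lambda>v. h v + e * d v"], simp)
    apply (drule bspec[of _ _ "\<lambda>v. h v + (-e) * d v"], simp)
    apply (drule spec[of _ "1/2"])
    apply (auto simp: algebra_simps)
    done
  then have "\<And>v. e * d v = - e * d v" by (metis add_left_cancel)
  then show ?thesis using epos by (auto intro!: ext)
qed

fun downT :: "nat \<times> nat \<times> nat \<Rightarrow> tri" where
  "downT (p,q,k) = Down p q"
fun upT :: "nat \<times> nat \<times> nat \<Rightarrow> tri" where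
  "upT (p,q,k) = (if k = 0 then Up p q else if k = 1 then Up (p+1) q else Up p (q+1))"
fun flatL :: "nat \<Rightarrow> (nat \<times> nat \<Rightarrow> real) \<Rightarrow> nat \<times> nat \<times> nat \<Rightarrow> bool" where
  "flatL n h (p,q,k) \<longleftrightarrow> p+q+2 \<le> n \<and> k < 3 \<and> rf k p q h = 0"

lemma flat_adj_L: "flatL n h l \<Longrightarrow> flat_adj n h (downT l) (upT l)"
proof -
  assume a: "flatL n h l"
  obtain p q k where l: "l = (p,q,k)" by (cases l)
  have pq: "p+q+2 \<le> n" and k: "k < 3" and r: "rf k p q h = 0" using a l by auto
  consider "k = 0" | "k = 1" | "k = 2" using k by arith
  then show ?thesis
  proof cases
    case 1 then show ?thesis using pq r l unfolding flat_adj_def rf_def by auto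
  next
    case 2 then show ?thesis using pq r l unfolding flat_adj_def rf_def by auto
  next
    case 3 then show ?thesis using pq r l unfolding flat_adj_def rf_def by auto
  qed
qed

lemma finite_small: "finite (small_triangles n)"
proof -
  have "small_triangles n \<subseteq> (\<lambda>(p,q). Up p q) ` ({..n} \<times> {..n}) \<union> (\<lambda>(p,q). Down p q) ` ({..n} \<times> {..n})"
    unfolding small_triangles_def by force
  then show ?thesis by (rule finite_subset) auto
qed

lemma flatL_valid: "flatL n h l \<Longrightarrow> downT l \<in> small_triangles n \<and> upT l \<in> small_triangles n"
  by (cases l) (auto simp: small_triangles_def)

lemma up_down_inj: "flatL n h l \<Longrightarrow> flatL n h l' \<Longrightarrow> downT l = downT l' \<Longrightarrow> upT l = upT l' \<Longrightarrow> l = l'"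
proof -
  assume a: "flatL n h l" "flatL n h l'" "downT l = downT l'" "upT l = upT l'"
  obtain p q k where l: "l = (p,q,k)" by (cases l)
  obtain p' q' k' where l': "l' = (p',q',k')" by (cases l')
  have "k < 3" "k' < 3" "p = p'" "q = q'" using a l l' by auto
  then show ?thesis using a(4) l l' by (auto split: if_splits)
qed

lemma card3:
  assumes "finite F" "a \<in> F" "b \<in> F" "c \<in> F" "a \<noteq> b" "a \<noteq> c" "b \<noteq> c"
  shows "card F \<ge> 3"
proof -
  have "{a,b,c} \<subseteq> F" using assms by auto
  then have "card {a,b,c} \<le> card F" using assms(1) by (rule card_mono[rotated])
  then show ?thesis using assms by simp
qed

lemma small_from_card:
  assumes cardc: "\<forall>F \<in> flatspaces n h. card F = 1 \<or> card F = 2"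
    and fl: "flatL n h l" and fl': "flatL n h l'"
    and eq: "downT l = downT l' \<or> upT l = upT l'"
  shows "l = l'"
proof (rule ccontr)
  assume ne: "l \<noteq> l'"
  let ?R = "\<lambda>T U. flat_adj n h T U \<or> flat_adj n h U T"
  have ad: "flat_adj n h (downT l) (upT l)" "flat_adj n h (downT l') (upT l')"
    using flat_adj_L fl fl' by auto
  have v: "downT l \<in> small_triangles n" "upT l \<in> small_triangles n"
     "downT l' \<in> small_triangles n" "upT l' \<in> small_triangles n"
    using flatL_valid fl fl' by auto
  show False
  proof (cases "downT l = downT l'")
    case True
    define T where "T = downT l"
    define F where "F = {U \<in> small_triangles n. flat_equiv n h T U}"
    have FF: "F \<in> flatspaces n h" unfolding flatspaces_def F_def using v T_def by auto
    have "flat_equiv n h T T" unfolding flat_equiv_def by simp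
    moreover have "flat_equiv n h T (upT l)" unfolding flat_equiv_def T_def
      using ad by (intro r_into_rtranclp) simp
    moreover have "flat_equiv n h T (upT l')" unfolding flat_equiv_def T_def True
      using ad by (intro r_into_rtranclp) simp
    moreover have "upT l \<noteq> upT l'" using up_down_inj[OF fl fl' True] ne by blast
    moreover have "T \<noteq> upT l" "T \<noteq> upT l'" unfolding T_def by (cases l; cases l'; simp split: if_splits)+
    ultimately have "card F \<ge> 3"
      using v finite_small[of n] T_def by (intro card3[of F T "upT l" "upT l'"]) (auto simp: F_def)
    then show False using cardc FF by auto
  next
    case False
    then have True: "upT l = upT l'" using eq by simp
    define T where "T = upT l"
    define F where "F = {U \<in> small_triangles n. flat_equiv n h T U}"
    have FF: "F \<in> flatspaces n h" unfolding flatspaces_def F_def using v T_def by auto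
    have "flat_equiv n h T T" unfolding flat_equiv_def by simp
    moreover have "flat_equiv n h T (downT l)" unfolding flat_equiv_def T_def
      using ad by (intro r_into_rtranclp) simp
    moreover have "flat_equiv n h T (downT l')" unfolding flat_equiv_def T_def True
      using ad by (intro r_into_rtranclp) simp
    moreover have "T \<noteq> downT l" "T \<noteq> downT l'" unfolding T_def by (cases l; cases l'; simp split: if_splits)+
    ultimately have "card F \<ge> 3"
      using v finite_small[of n] T_def False by (intro card3[of F T "downT l" "downT l'"]) (auto simp: F_def)
    then show False using cardc FF by auto
  qed
qed

lemma lin_solve:
  fixes c :: "'j \<Rightarrow> 'e \<Rightarrow> real"
  assumes "finite J" "finite X" "card J < card X"
  shows "\<exists>x. (\<exists>e\<in>X. x e \<noteq> 0) \<and> (\<forall>e. e \<notin> X \<longrightarrow> x e = 0) \<and> (\<forall>j\<in>J. (\<Sum>e\<in>X. c j e * x e) = 0)"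
  using assms
proof (induction J arbitrary: X c rule: finite_induct)
  case empty
  then obtain e0 where "e0 \<in> X" by fastforce
  then show ?case by (intro exI[of _ "\<lambda>e. if e = e0 then 1 else 0"]) auto
next
  case (insert j J)
  have cJ: "card J + 1 < card X" using insert by simp
  show ?case
  proof (cases "\<forall>e\<in>X. c j e = 0")
    case True
    obtain x where x: "(\<exists>e\<in>X. x e \<noteq> 0)" "(\<forall>e. e \<notin> X \<longrightarrow> x e = 0)" "(\<forall>j\<in>J. (\<Sum>e\<in>X. c j e * x e) = 0)"
      using insert.IH[of X c] insert.prems cJ by auto
    have "(\<Sum>e\<in>X. c j e * x e) = 0" using True by simp
    then show ?thesis using x by (intro exI[of _ x]) auto
  next
    case False
    then obtain e0 where e0: "e0 \<in> X" "c j e0 \<noteq> 0" by blast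
    define a where "a = c j e0"
    define c' where "c' = (\<lambda>j' e. c j' e - c j' e0 * c j e / a)"
    have "card (X - {e0}) = card X - 1" using e0 insert.prems by simp
    then have "card J < card (X - {e0})" using cJ by simp
    then obtain x' where x': "(\<exists>e\<in>X - {e0}. x' e \<noteq> 0)" "(\<forall>e. e \<notin> X - {e0} \<longrightarrow> x' e = 0)"
       "(\<forall>j\<in>J. (\<Sum>e\<in>X - {e0}. c' j e * x' e) = 0)"
      using insert.IH[of "X - {e0}" c'] insert.prems by auto
    define S where "S = (\<Sum>e\<in>X - {e0}. c j e * x' e)"
    define x where "x = x'(e0 := - S / a)"
    have anz: "a \<noteq> 0" using e0 a_def by simp
    have sumx: "(\<Sum>e\<in>X. f e * x e) = f e0 * (- S / a) + (\<Sum>e\<in>X - {e0}. f e * x' e)" for f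
    proof -
      have "(\<Sum>e\<in>X. f e * x e) = f e0 * x e0 + (\<Sum>e\<in>X - {e0}. f e * x e)"
        using e0 insert.prems by (simp add: sum.remove)
      also have "(\<Sum>e\<in>X - {e0}. f e * x e) = (\<Sum>e\<in>X - {e0}. f e * x' e)"
        unfolding x_def by (rule sum.cong) auto
      finally show ?thesis unfolding x_def by simp
    qed
    have eqj: "(\<Sum>e\<in>X. c j e * x e) = 0"
      unfolding sumx S_def a_def using anz a_def by simp
    have eqJ: "(\<Sum>e\<in>X. c j' e * x e) = 0" if "j' \<in> J" for j'
    proof -
      have "0 = (\<Sum>e\<in>X - {e0}. c' j' e * x' e)" using x' that by simp
      also have "\<dots> = (\<Sum>e\<in>X - {e0}. c j' e * x' e - (c j' e0 / a) * (c j e * x' e))"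
        unfolding c'_def by (rule sum.cong) (auto simp: algebra_simps)
      also have "\<dots> = (\<Sum>e\<in>X - {e0}. c j' e * x' e) - (c j' e0 / a) * S"
        unfolding S_def by (simp add: sum_subtractf sum_distrib_left)
      finally show ?thesis unfolding sumx by (simp add: algebra_simps)
    qed
    show ?thesis
    proof (intro exI[of _ x] conjI)
      show "\<exists>e\<in>X. x e \<noteq> 0" using x' unfolding x_def by force
      show "\<forall>e. e \<notin> X \<longrightarrow> x e = 0" using x' e0 unfolding x_def by auto
      show "\<forall>j'\<in>insert j J. (\<Sum>e\<in>X. c j' e * x e) = 0" using eqj eqJ by auto
    qed
  qed
qed

type_synonym edge = "nat \<times> nat \<times> nat"

fun validE :: "nat \<Rightarrow> edge \<Rightarrow> bool" where
  "validE n (k,p,q) \<longleftrightarrow> k < 3 \<and> p+q+1 \<le> n"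
fun bordE :: "nat \<Rightarrow> edge \<Rightarrow> bool" where
  "bordE n (k,p,q) \<longleftrightarrow> (k = 0 \<and> q = 0) \<or> (k = 1 \<and> p = 0) \<or> (k = 2 \<and> p+q+1 = n)"
fun diffE :: "(nat \<times> nat \<Rightarrow> real) \<Rightarrow> edge \<Rightarrow> real" where
  "diffE g (k,p,q) = (if k = 0 then g (p+1,q) - g (p,q) else if k = 1 then g (p,q+1) - g (p,q)
     else g (p,q+1) - g (p+1,q))"
fun sgE :: "edge \<Rightarrow> real" where
  "sgE (k,p,q) = (if k = 1 then -1 else 1)"
fun tedges :: "tri \<Rightarrow> edge set" where
  "tedges (Up p q) = {(0,p,q),(1,p,q),(2,p,q)}"
| "tedges (Down p q) = {(0,p,q+1),(1,p+1,q),(2,p,q)}"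
definition teq :: "(edge \<Rightarrow> real) \<Rightarrow> tri \<Rightarrow> real" where
  "teq x T = (\<Sum>e\<in>tedges T. sgE e * x e)"

lemma teq_Up: "teq x (Up p q) = x (0,p,q) - x (1,p,q) + x (2,p,q)"
  unfolding teq_def by simp
lemma teq_Down: "teq x (Down p q) = x (0,p,q+1) - x (1,p+1,q) + x (2,p,q)"
  unfolding teq_def by simp

lemma teq_diff: "teq (diffE g) T = 0"
  by (cases T) (simp_all add: teq_Up teq_Down)

fun pA :: "nat \<times> nat \<times> nat \<Rightarrow> edge" where
  "pA (p,q,k) = (if k = 0 then (0,p,q) else if k = 1 then (0,p,q+1) else (1,p+1,q))"
fun pB :: "nat \<times> nat \<times> nat \<Rightarrow> edge" where
  "pB (p,q,k) = (if k = 0 then (0,p,q+1) else if k = 1 then (0,p+1,q) else (1,p,q+1))"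
fun pC :: "nat \<times> nat \<times> nat \<Rightarrow> edge" where
  "pC (p,q,k) = (if k = 0 then (1,p,q) else (2,p,q))"
fun pE :: "nat \<times> nat \<times> nat \<Rightarrow> edge" where
  "pE (p,q,k) = (if k = 0 then (1,p+1,q) else if k = 1 then (2,p+1,q) else (2,p,q+1))"
fun shr :: "nat \<times> nat \<times> nat \<Rightarrow> edge" where
  "shr (p,q,k) = (if k = 0 then (2,p,q) else if k = 1 then (1,p+1,q) else (0,p,q+1))"

lemma l_cases:
  assumes "flatL n h l"
  obtains p q where "l = (p,q,0)" "p+q+2 \<le> n" | p q where "l = (p,q,1)" "p+q+2 \<le> n"
    | p q where "l = (p,q,2)" "p+q+2 \<le> n"
proof -
  obtain p q k where l: "l = (p,q,k)" by (cases l)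
  then have "k < 3" "p+q+2 \<le> n" using assms by auto
  then show ?thesis using that l by (auto dest!: k3)
qed

lemma l_cases':
  assumes "flatL n h l"
  shows "(\<exists>p q. l = (p,q,0) \<and> p+q+2 \<le> n) \<or> (\<exists>p q. l = (p,q,1) \<and> p+q+2 \<le> n) \<or> (\<exists>p q. l = (p,q,2) \<and> p+q+2 \<le> n)"
  using assms by (rule l_cases) auto

lemma rf_pair: "flatL n h l \<Longrightarrow> l = (p,q,k) \<Longrightarrow> rf k p q g = diffE g (pA l) - diffE g (pB l)"
  by (erule l_cases) (auto simp: rf_def)

lemma pair_iff:
  assumes "flatL n h l" "teq x (downT l) = 0" "teq x (upT l) = 0"
  shows "x (pA l) = x (pB l) \<longleftrightarrow> x (pC l) = x (pE l)"
  using assms(1)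
  by (rule l_cases) (use assms in \<open>auto simp: teq_Up teq_Down\<close>)

lemma ledges_sub:
  assumes "flatL n h l"
  shows "tedges (downT l) \<subseteq> {pA l, pB l, pC l, pE l, shr l}"
    "tedges (upT l) \<subseteq> {pA l, pB l, pC l, pE l, shr l}"
    "pA l \<in> tedges (downT l) \<union> tedges (upT l)"
    "pB l \<in> tedges (downT l) \<union> tedges (upT l)"
    "pC l \<in> tedges (downT l) \<union> tedges (upT l)"
    "pE l \<in> tedges (downT l) \<union> tedges (upT l)"
    "shr l \<in> tedges (downT l)" "shr l \<in> tedges (upT l)"
  using l_cases'[OF assms] by auto

lemma l_valid:
  assumes "flatL n h l"
  shows "validE n (pA l)" "validE n (pB l)" "validE n (pC l)" "validE n (pE l)" "validE n (shr l)"
    "\<not> bordE n (shr l)" "pA l \<noteq> pB l"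
  using l_cases'[OF assms] by (elim disjE exE conjE; simp)+

fun upOf :: "edge \<Rightarrow> tri" where
  "upOf (k,p,q) = Up p q"
fun downOf :: "edge \<Rightarrow> tri" where
  "downOf (k,p,q) = (if k = 0 then Down p (q-1) else if k = 1 then Down (p-1) q else Down p q)"

lemma up_unique: "e \<in> tedges (Up a b) \<Longrightarrow> Up a b = upOf e"
  by auto
lemma down_unique: "e \<in> tedges (Down a b) \<Longrightarrow> Down a b = downOf e"
  by auto

lemma upOf_in: "validE n e \<Longrightarrow> upOf e \<in> small_triangles n \<and> e \<in> tedges (upOf e)"
proof -
  assume v: "validE n e"
  obtain k p q where e: "e = (k,p,q)" by (cases e)
  then have "k = 0 \<or> k = 1 \<or> k = 2" "p+q+1 \<le> n" using v by auto
  then show ?thesis using e unfolding small_triangles_def by auto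
qed
lemma downOf_in: "validE n e \<Longrightarrow> \<not> bordE n e \<Longrightarrow> downOf e \<in> small_triangles n \<and> e \<in> tedges (downOf e)"
proof -
  assume v: "validE n e" "\<not> bordE n e"
  obtain k p q where e: "e = (k,p,q)" by (cases e)
  then have "k = 0 \<or> k = 1 \<or> k = 2" "p+q+1 \<le> n" using v by auto
  then consider "k = 0" "q \<ge> 1" "p+q+1 \<le> n" | "k = 1" "p \<ge> 1" "p+q+1 \<le> n" | "k = 2" "p+q+2 \<le> n"
    using v e by fastforce
  then show ?thesis
  proof cases
    case 1 then show ?thesis using e unfolding small_triangles_def
      by (auto intro!: exI[of _ p] exI[of _ "q-1"])
  next
    case 2 then show ?thesis using e unfolding small_triangles_def
      by (auto intro!: exI[of _ "p-1"] exI[of _ q])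
  next
    case 3 then show ?thesis using e unfolding small_triangles_def by auto
  qed
qed

lemma tedges_valid: "T \<in> small_triangles n \<Longrightarrow> e \<in> tedges T \<Longrightarrow> validE n e"
  unfolding small_triangles_def by auto

lemma tri_shr: "T \<in> small_triangles n \<Longrightarrow> flatL n h l \<Longrightarrow> shr l \<in> tedges T \<Longrightarrow> T = downT l \<or> T = upT l"
proof -
  assume T: "T \<in> small_triangles n" and fl: "flatL n h l" and s: "shr l \<in> tedges T"
  show ?thesis
  proof (cases T)
    case (Up a b)
    then have "T = upOf (shr l)" using s up_unique by simp
    moreover have "upT l = upOf (shr l)" using l_cases'[OF fl] by auto
    ultimately show ?thesis by simp
  next
    case (Down a b)
    then have "T = downOf (shr l)" using s down_unique by simp
    moreover have "downT l = downOf (shr l)" using l_cases'[OF fl] by auto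
    ultimately show ?thesis by simp
  qed
qed

lemma M_sg: "y \<in> Mset n h \<Longrightarrow> sgE e * y \<in> Mset n h"
  by (cases e) (auto intro: M_neg)

lemma sgE_sq: "sgE e * sgE e = 1"
  by (cases e) auto

lemma downT_ne_upT: "downT l \<noteq> upT l'"
  by (cases l; cases l') auto

locale core =
  fixes n :: nat and h :: "nat \<times> nat \<Rightarrow> real"
  assumes rig: "\<And>d. \<forall>v. v \<notin> hive_vertices n \<or> v \<in> border n \<longrightarrow> d v = 0 \<Longrightarrow>
      \<forall>p q k. p+q+2 \<le> n \<longrightarrow> k < 3 \<longrightarrow> rf k p q h = 0 \<longrightarrow> rf k p q d = 0 \<Longrightarrow> d = (\<lambda>_. 0)"
    and sml: "\<And>l l'. flatL n h l \<Longrightarrow> flatL n h l' \<Longrightarrow> downT l = downT l' \<or> upT l = upT l' \<Longrightarrow> l = l'"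
begin

definition bad where "bad e \<longleftrightarrow> validE n e \<and> diffE h e \<notin> Mset n h"
definition L2 where "L2 = {l. flatL n h l \<and> bad (pA l) \<and> bad (pC l)}"
definition X where "X = {e. bad e} \<union> shr ` L2"
definition UA where "UA = {T \<in> small_triangles n. \<exists>p q. T = Up p q}"
definition DA where "DA = {T \<in> small_triangles n. \<exists>p q. T = Down p q}"
definition Tv where "Tv = {T \<in> small_triangles n. tedges T \<inter> X \<noteq> {}}"

lemma bord_M: "validE n e \<Longrightarrow> bordE n e \<Longrightarrow> diffE h e \<in> Mset n h"
proof -
  assume v: "validE n e" and b: "bordE n e"
  obtain k p q where e: "e = (k,p,q)" by (cases e)
  consider "k = 0" "q = 0" | "k = 1" "p = 0" | "k = 2" "p+q+1 = n" using b e by auto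
  then show ?thesis
  proof cases
    case 1 then show ?thesis using e v by (auto intro!: M_diff M_border simp: border_def)
  next
    case 2 then show ?thesis using e v by (auto intro!: M_diff M_border simp: border_def)
  next
    case 3 then show ?thesis using e v by (auto intro!: M_diff M_border simp: border_def)
  qed
qed

lemma bad_inter: "bad e \<Longrightarrow> validE n e \<and> \<not> bordE n e"
  using bord_M unfolding bad_def by blast

lemma flat_diffs: "flatL n h l \<Longrightarrow> diffE h (pA l) = diffE h (pB l) \<and> diffE h (pC l) = diffE h (pE l)"
proof -
  assume fl: "flatL n h l"
  obtain p q k where l: "l = (p,q,k)" by (cases l)
  have "rf k p q h = 0" using fl l by simp
  then have "diffE h (pA l) = diffE h (pB l)" using rf_pair[OF fl l, of h] by simp
  moreover have "diffE h (pC l) = diffE h (pE l)"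
    using pair_iff[OF fl, of "diffE h"] teq_diff calculation by blast
  ultimately show ?thesis by simp
qed

lemma bad_pairs: "flatL n h l \<Longrightarrow> (bad (pA l) \<longleftrightarrow> bad (pB l)) \<and> (bad (pC l) \<longleftrightarrow> bad (pE l))"
  using flat_diffs l_valid unfolding bad_def by metis

lemma closure:
  assumes T: "T \<in> small_triangles n" and e: "e \<in> tedges T" and o: "\<forall>e'\<in>tedges T - {e}. \<not> bad e'"
  shows "\<not> bad e"
proof -
  have fin: "finite (tedges T)" by (cases T) auto
  have "0 = teq (diffE h) T" using teq_diff by simp
  also have "\<dots> = sgE e * diffE h e + (\<Sum>e'\<in>tedges T - {e}. sgE e' * diffE h e')"
    unfolding teq_def using fin e by (simp add: sum.remove)
  finally have eq: "sgE e * diffE h e = - (\<Sum>e'\<in>tedges T - {e}. sgE e' * diffE h e')" by simp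
  have "(\<Sum>e'\<in>tedges T - {e}. sgE e' * diffE h e') \<in> Mset n h"
  proof (rule M_sum)
    show "finite (tedges T - {e})" using fin by simp
    fix e' assume e': "e' \<in> tedges T - {e}"
    then have "validE n e'" using tedges_valid T by blast
    then have "diffE h e' \<in> Mset n h" using o e' unfolding bad_def by blast
    then show "sgE e' * diffE h e' \<in> Mset n h" by (rule M_sg)
  qed
  then have "sgE e * diffE h e \<in> Mset n h" unfolding eq by (rule M_neg)
  then have "sgE e * (sgE e * diffE h e) \<in> Mset n h" by (rule M_sg)
  then have "diffE h e \<in> Mset n h" by (simp add: mult.assoc[symmetric] sgE_sq)
  then show ?thesis unfolding bad_def by blast
qed

lemma X_inter: "e \<in> X \<Longrightarrow> validE n e \<and> \<not> bordE n e"
  unfolding X_def L2_def using bad_inter l_valid by blast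

lemma finite_X: "finite X"
proof -
  have "X \<subseteq> {..<3} \<times> {..n} \<times> {..n}"
  proof
    fix e assume "e \<in> X"
    then have "validE n e" using X_inter by blast
    then show "e \<in> {..<3} \<times> {..n} \<times> {..n}" by (cases e) auto
  qed
  then show ?thesis by (rule finite_subset) auto
qed

lemma finite_L2: "finite L2"
proof -
  have "L2 \<subseteq> {..n} \<times> {..n} \<times> {..<3}" unfolding L2_def by auto
  then show ?thesis by (rule finite_subset) auto
qed

lemma tri_not_L2:
  assumes "T \<in> small_triangles n" "\<not> (\<exists>l\<in>L2. T = downT l \<or> T = upT l)"
  shows "tedges T \<inter> X \<subseteq> {e. bad e}"
proof
  fix e assume e: "e \<in> tedges T \<inter> X"
  show "e \<in> {e. bad e}"
  proof (rule ccontr)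
    assume "e \<notin> {e. bad e}"
    then obtain l where l: "l \<in> L2" "e = shr l" using e unfolding X_def by auto
    then have "T = downT l \<or> T = upT l" using tri_shr[OF assms(1)] e unfolding L2_def by blast
    then show False using assms(2) l by blast
  qed
qed

lemma L2_edges: "l \<in> L2 \<Longrightarrow> tedges (downT l) \<subseteq> X \<and> tedges (upT l) \<subseteq> X"
proof -
  assume l: "l \<in> L2"
  then have fl: "flatL n h l" and b: "bad (pA l)" "bad (pC l)" unfolding L2_def by auto
  then have "bad (pB l)" "bad (pE l)" using bad_pairs by blast+
  then have "{pA l, pB l, pC l, pE l, shr l} \<subseteq> X" using b l unfolding X_def by auto
  then show ?thesis using ledges_sub[OF fl] by blast
qed

lemma card_tedges: "card (tedges T) = 3"
  by (cases T) auto

lemma F2: "l \<in> L2 \<Longrightarrow> T = downT l \<or> T = upT l \<Longrightarrow> card (tedges T \<inter> X) = 3"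
  using L2_edges card_tedges by (metis Int_absorb2)

lemma F1:
  assumes T: "T \<in> Tv" shows "2 \<le> card (tedges T \<inter> X)"
proof (cases "\<exists>l\<in>L2. T = downT l \<or> T = upT l")
  case True then show ?thesis using F2 by fastforce
next
  case False
  have Ts: "T \<in> small_triangles n" using T unfolding Tv_def by blast
  have sub: "tedges T \<inter> X \<subseteq> {e. bad e}" using tri_not_L2[OF Ts False] .
  obtain e where e: "e \<in> tedges T \<inter> X" using T unfolding Tv_def by blast
  then have "bad e" using sub by blast
  then obtain e' where e': "e' \<in> tedges T - {e}" "bad e'" using closure[OF Ts] e by blast
  then have "e' \<in> X" unfolding X_def by blast
  then have "{e, e'} \<subseteq> tedges T \<inter> X" using e e' by blast
  moreover have "finite (tedges T \<inter> X)" using finite_X by blast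
  ultimately have "card {e, e'} \<le> card (tedges T \<inter> X)" by (rule card_mono[rotated])
  moreover have "card {e, e'} = 2" using e' by auto
  ultimately show ?thesis by simp
qed

end

context core
begin

lemma finite_DA: "finite DA" unfolding DA_def using finite_small by auto
lemma finite_UA: "finite UA" unfolding UA_def using finite_small by auto

lemma downOf_Down: "\<exists>a b. downOf e = Down a b"
  by (cases e) auto

lemma swapD:
  fixes f :: "edge \<Rightarrow> 'a::comm_monoid_add"
  shows "(\<Sum>T\<in>DA. \<Sum>e\<in>X. if e \<in> tedges T then f e else 0) = (\<Sum>e\<in>X. f e)"
proof -
  have "(\<Sum>T\<in>DA. \<Sum>e\<in>X. if e \<in> tedges T then f e else 0) = (\<Sum>e\<in>X. \<Sum>T\<in>DA. if e \<in> tedges T then f e else 0)"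
    by (rule sum.swap)
  also have "\<dots> = (\<Sum>e\<in>X. f e)"
  proof (rule sum.cong[OF refl])
    fix e assume e: "e \<in> X"
    have di: "downOf e \<in> small_triangles n \<and> e \<in> tedges (downOf e)" using X_inter[OF e] downOf_in by blast
    then have dDA: "downOf e \<in> DA" unfolding DA_def using downOf_Down by blast
    have "(\<Sum>T\<in>DA. if e \<in> tedges T then f e else 0) = (\<Sum>T\<in>DA. if downOf e = T then f e else 0)"
    proof (rule sum.cong[OF refl])
      fix T assume "T \<in> DA"
      then obtain a b where T: "T = Down a b" unfolding DA_def by blast
      show "(if e \<in> tedges T then f e else 0) = (if downOf e = T then f e else 0)"
        using down_unique[of e a b] di T by auto
    qed
    also have "\<dots> = f e" using dDA finite_DA by simp
    finally show "(\<Sum>T\<in>DA. if e \<in> tedges T then f e else 0) = f e" .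
  qed
  finally show ?thesis .
qed

lemma swapU:
  fixes f :: "edge \<Rightarrow> 'a::comm_monoid_add"
  shows "(\<Sum>T\<in>UA. \<Sum>e\<in>X. if e \<in> tedges T then f e else 0) = (\<Sum>e\<in>X. f e)"
proof -
  have "(\<Sum>T\<in>UA. \<Sum>e\<in>X. if e \<in> tedges T then f e else 0) = (\<Sum>e\<in>X. \<Sum>T\<in>UA. if e \<in> tedges T then f e else 0)"
    by (rule sum.swap)
  also have "\<dots> = (\<Sum>e\<in>X. f e)"
  proof (rule sum.cong[OF refl])
    fix e assume e: "e \<in> X"
    have di: "upOf e \<in> small_triangles n \<and> e \<in> tedges (upOf e)" using X_inter[OF e] upOf_in by blast
    then have dUA: "upOf e \<in> UA" unfolding UA_def by (cases e) auto
    have "(\<Sum>T\<in>UA. if e \<in> tedges T then f e else 0) = (\<Sum>T\<in>UA. if upOf e = T then f e else 0)"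
    proof (rule sum.cong[OF refl])
      fix T assume "T \<in> UA"
      then obtain a b where T: "T = Up a b" unfolding UA_def by blast
      show "(if e \<in> tedges T then f e else 0) = (if upOf e = T then f e else 0)"
        using up_unique[of e a b] di T by auto
    qed
    also have "\<dots> = f e" using dUA finite_UA by simp
    finally show "(\<Sum>T\<in>UA. if e \<in> tedges T then f e else 0) = f e" .
  qed
  finally show ?thesis .
qed

lemma card_as_sum: "card (tedges T \<inter> X) = (\<Sum>e\<in>X. if e \<in> tedges T then (1::nat) else 0)"
proof -
  have "card (tedges T \<inter> X) = card (X \<inter> tedges T)" by (simp add: Int_commute)
  also have "\<dots> = (\<Sum>e\<in>X \<inter> tedges T. (1::nat))" by simp
  also have "\<dots> = (\<Sum>e\<in>X. if e \<in> tedges T then (1::nat) else 0)"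
    using finite_X by (rule sum.inter_restrict)
  finally show ?thesis .
qed

lemma card_sumD: "(\<Sum>T\<in>DA. card (tedges T \<inter> X)) = card X"
  unfolding card_as_sum swapD by simp
lemma card_sumU: "(\<Sum>T\<in>UA. card (tedges T \<inter> X)) = card X"
  unfolding card_as_sum swapU by simp

lemma sum_ind: "finite A \<Longrightarrow> (\<Sum>T\<in>A. if P T then c else (0::nat)) = c * card {T\<in>A. P T}"
  by (simp add: sum.If_cases Int_def conj_commute)

lemma count_D: "card X \<ge> 2 * card (Tv \<inter> DA) + card L2"
proof -
  have inj: "inj_on downT L2" unfolding inj_on_def L2_def using sml by blast
  have sub: "downT ` L2 \<subseteq> DA" unfolding DA_def L2_def using flatL_valid by (force)
  have "(\<Sum>T\<in>DA. (if T \<in> Tv then 2 else 0) + (if T \<in> downT ` L2 then 1 else 0)) \<le> (\<Sum>T\<in>DA. card (tedges T \<inter> X))"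
  proof (rule sum_mono)
    fix T assume "T \<in> DA"
    show "(if T \<in> Tv then 2 else 0) + (if T \<in> downT ` L2 then 1 else 0) \<le> card (tedges T \<inter> X)"
    proof (cases "T \<in> downT ` L2")
      case True
      then obtain l where l: "l \<in> L2" "T = downT l" by blast
      then show ?thesis using F2[OF l(1)] by simp
    next
      case False
      then show ?thesis using F1 by simp
    qed
  qed
  also have "\<dots> = card X" by (rule card_sumD)
  finally have "(\<Sum>T\<in>DA. (if T \<in> Tv then 2 else 0) + (if T \<in> downT ` L2 then 1 else 0)) \<le> card X" .
  moreover have "(\<Sum>T\<in>DA. (if T \<in> Tv then 2 else 0) + (if T \<in> downT ` L2 then 1 else 0))
      = 2 * card {T\<in>DA. T \<in> Tv} + 1 * card {T\<in>DA. T \<in> downT ` L2}"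
    by (simp add: sum.distrib sum_ind[OF finite_DA] del: sum_ind)
  moreover have "{T\<in>DA. T \<in> Tv} = Tv \<inter> DA" by auto
  moreover have "{T\<in>DA. T \<in> downT ` L2} = downT ` L2" using sub by auto
  moreover have "card (downT ` L2) = card L2" using inj by (rule card_image)
  ultimately show ?thesis by simp
qed

lemma count_U: "card X \<ge> 2 * card (Tv \<inter> UA) + card L2"
proof -
  have inj: "inj_on upT L2" unfolding inj_on_def L2_def using sml by blast
  have sub: "upT ` L2 \<subseteq> UA" unfolding UA_def L2_def using flatL_valid
    by (force split: if_splits)
  have "(\<Sum>T\<in>UA. (if T \<in> Tv then 2 else 0) + (if T \<in> upT ` L2 then 1 else 0)) \<le> (\<Sum>T\<in>UA. card (tedges T \<inter> X))"
  proof (rule sum_mono)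
    fix T assume "T \<in> UA"
    show "(if T \<in> Tv then 2 else 0) + (if T \<in> upT ` L2 then 1 else 0) \<le> card (tedges T \<inter> X)"
    proof (cases "T \<in> upT ` L2")
      case True
      then obtain l where l: "l \<in> L2" "T = upT l" by blast
      then show ?thesis using F2[OF l(1)] by simp
    next
      case False
      then show ?thesis using F1 by simp
    qed
  qed
  also have "\<dots> = card X" by (rule card_sumU)
  finally have "(\<Sum>T\<in>UA. (if T \<in> Tv then 2 else 0) + (if T \<in> upT ` L2 then 1 else 0)) \<le> card X" .
  moreover have "(\<Sum>T\<in>UA. (if T \<in> Tv then 2 else 0) + (if T \<in> upT ` L2 then 1 else 0))
      = 2 * card {T\<in>UA. T \<in> Tv} + 1 * card {T\<in>UA. T \<in> upT ` L2}"
    by (simp add: sum.distrib sum_ind[OF finite_UA] del: sum_ind)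
  moreover have "{T\<in>UA. T \<in> Tv} = Tv \<inter> UA" by auto
  moreover have "{T\<in>UA. T \<in> upT ` L2} = upT ` L2" using sub by auto
  moreover have "card (upT ` L2) = card L2" using inj by (rule card_image)
  ultimately show ?thesis by simp
qed

lemma UA_DA: "small_triangles n = UA \<union> DA" "UA \<inter> DA = {}"
proof -
  have "\<And>T::tri. (\<exists>p q. T = Up p q) \<or> (\<exists>p q. T = Down p q)" by (case_tac T) auto
  then show "small_triangles n = UA \<union> DA" unfolding UA_def DA_def by blast
  show "UA \<inter> DA = {}" unfolding UA_def DA_def by auto
qed

lemma count: "card Tv + card L2 \<le> card X"
proof -
  have fT: "finite Tv" unfolding Tv_def using finite_small by auto
  have "Tv = (Tv \<inter> UA) \<union> (Tv \<inter> DA)" using UA_DA unfolding Tv_def by auto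
  moreover have "(Tv \<inter> UA) \<inter> (Tv \<inter> DA) = {}" using UA_DA by auto
  ultimately have "card Tv = card (Tv \<inter> UA) + card (Tv \<inter> DA)"
    using fT by (metis card_Un_disjoint finite_Int)
  then show ?thesis using count_D count_U by linarith
qed

end

context core
begin

lemma teq_X:
  assumes "\<forall>e. e \<notin> X \<longrightarrow> x e = 0"
  shows "teq x T = (\<Sum>e\<in>X. if e \<in> tedges T then sgE e * x e else 0)"
proof -
  have fin: "finite (tedges T)" by (cases T) auto
  have "teq x T = (\<Sum>e\<in>tedges T \<inter> X. sgE e * x e)"
    unfolding teq_def using fin assms by (intro sum.mono_neutral_right) auto
  also have "\<dots> = (\<Sum>e\<in>X \<inter> tedges T. sgE e * x e)" by (simp add: Int_commute)
  also have "\<dots> = (\<Sum>e\<in>X. if e \<in> tedges T then sgE e * x e else 0)"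
    using finite_X by (rule sum.inter_restrict)
  finally show ?thesis .
qed

lemma no_bad: "\<not> bad e0"
proof
  assume b0: "bad e0"
  define T0 where "T0 = upOf e0"
  have e0X: "e0 \<in> X" using b0 unfolding X_def by blast
  have T0s: "T0 \<in> small_triangles n" and e0T: "e0 \<in> tedges T0"
    using upOf_in bad_inter[OF b0] unfolding T0_def by blast+
  have T0v: "T0 \<in> Tv" unfolding Tv_def using T0s e0T e0X by blast
  have T0U: "T0 \<in> UA" unfolding UA_def T0_def using T0s[unfolded T0_def] by (cases e0) auto
  have fT: "finite Tv" unfolding Tv_def using finite_small by auto
  define J :: "(tri + (nat \<times> nat \<times> nat)) set" where "J = Inl ` (Tv - {T0}) \<union> Inr ` L2"
  have fJ: "finite J" unfolding J_def using fT finite_L2 by auto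
  have "card J = card (Inl ` (Tv - {T0}) :: (tri + (nat \<times> nat \<times> nat)) set) + card (Inr ` L2 :: (tri + (nat \<times> nat \<times> nat)) set)"
    unfolding J_def using fT finite_L2 by (intro card_Un_disjoint) auto
  also have "\<dots> = card (Tv - {T0}) + card L2"
    by (simp add: card_image)
  also have "\<dots> = card Tv - 1 + card L2" using T0v fT by simp
  finally have cJ: "card J < card X" using count T0v fT
    by (metis Suc_diff_1 card_gt_0_iff empty_iff add_Suc less_le_trans lessI)
  define c :: "(tri + (nat \<times> nat \<times> nat)) \<Rightarrow> edge \<Rightarrow> real" where
    "c = (\<lambda>j e. case j of Inl T \<Rightarrow> (if e \<in> tedges T then sgE e else 0)
         | Inr l \<Rightarrow> (if e = pA l then 1 else if e = pB l then -1 else 0))"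
  obtain x where xnz: "\<exists>e\<in>X. x e \<noteq> 0" and xz: "\<forall>e. e \<notin> X \<longrightarrow> x e = 0"
    and xeq: "\<forall>j\<in>J. (\<Sum>e\<in>X. c j e * x e) = 0"
    using lin_solve[OF fJ finite_X cJ, of c] by blast
  have teqX: "teq x T = (\<Sum>e\<in>X. if e \<in> tedges T then sgE e * x e else 0)" for T
    using teq_X[OF xz] .
  have eqT: "teq x T = 0" if "T \<in> small_triangles n" "T \<noteq> T0" for T
  proof (cases "T \<in> Tv")
    case True
    then have "Inl T \<in> J" unfolding J_def using that by blast
    then have "(\<Sum>e\<in>X. c (Inl T) e * x e) = 0" using xeq by blast
    moreover have "(\<Sum>e\<in>X. c (Inl T) e * x e) = teq x T"
      unfolding teqX c_def by (rule sum.cong) auto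
    ultimately show ?thesis by simp
  next
    case False
    then have "tedges T \<inter> X = {}" unfolding Tv_def using that by blast
    then show ?thesis unfolding teqX by (intro sum.neutral) auto
  qed
  have dep: "(\<Sum>T\<in>UA. teq x T) = (\<Sum>T\<in>DA. teq x T)"
    unfolding teqX swapU swapD ..
  have "(\<Sum>T\<in>DA. teq x T) = 0"
  proof (rule sum.neutral, rule ballI)
    fix T assume T: "T \<in> DA"
    then have "T \<noteq> T0" using UA_DA(2) T0U by blast
    moreover have "T \<in> small_triangles n" using T unfolding DA_def by blast
    ultimately show "teq x T = 0" using eqT by blast
  qed
  moreover have "(\<Sum>T\<in>UA. teq x T) = teq x T0 + (\<Sum>T\<in>UA - {T0}. teq x T)"
    using T0U finite_UA by (simp add: sum.remove)
  moreover have "(\<Sum>T\<in>UA - {T0}. teq x T) = 0"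
    by (rule sum.neutral) (use eqT in \<open>auto simp: UA_def\<close>)
  ultimately have "teq x T0 = 0" using dep by simp
  then have eqAll: "teq x T = 0" if "T \<in> small_triangles n" for T
    using eqT that by blast
  have xz_good: "x e = 0" if t1: "e \<in> {pA l, pB l, pC l, pE l}" and t2: "\<not> bad e" and t3: "flatL n h l" and t4: "l \<notin> L2" for e l
  proof -
    have "e \<notin> X"
    proof
      assume "e \<in> X"
      then obtain l' where l': "l' \<in> L2" "e = shr l'" using t2 unfolding X_def by blast
      have fl': "flatL n h l'" using l' unfolding L2_def by blast
      obtain T where T: "T \<in> {downT l, upT l}" "e \<in> tedges T"
        using ledges_sub(3-6)[OF t3] t1 by blast
      have Ts: "T \<in> small_triangles n" using T flatL_valid[OF t3] by blast
      have "T = downT l' \<or> T = upT l'" using tri_shr[OF Ts fl'] T l' by blast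
      then have "downT l = downT l' \<or> upT l = upT l'" using T downT_ne_upT by (metis insert_iff singletonD)
      then have "l = l'" using sml[OF t3 fl'] by blast
      then show False using l' t4 by blast
    qed
    then show ?thesis using xz by blast
  qed
  have eqL: "x (pA l) = x (pB l)" if fl: "flatL n h l" for l
  proof (cases "l \<in> L2")
    case True
    then have "Inr l \<in> J" unfolding J_def by blast
    then have "(\<Sum>e\<in>X. c (Inr l) e * x e) = 0" using xeq by blast
    moreover have "(\<Sum>e\<in>X. c (Inr l) e * x e) = (\<Sum>e\<in>X. (if e = pA l then x e else 0) - (if e = pB l then x e else 0))"
      unfolding c_def using l_valid(7)[OF fl] by (intro sum.cong) auto
    moreover have "pA l \<in> X" "pB l \<in> X" using L2_edges[OF True] ledges_sub(3,4)[OF fl] by blast+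
    ultimately show ?thesis using finite_X by (simp add: sum_subtractf)
  next
    case False
    then have "\<not> bad (pA l) \<or> \<not> bad (pC l)" using fl unfolding L2_def by blast
    then show ?thesis
    proof
      assume "\<not> bad (pA l)"
      then have "\<not> bad (pB l)" using bad_pairs[OF fl] by blast
      then show ?thesis using xz_good[OF _ _ fl False] \<open>\<not> bad (pA l)\<close> by simp
    next
      assume a: "\<not> bad (pC l)"
      then have "\<not> bad (pE l)" using bad_pairs[OF fl] by blast
      then have "x (pC l) = x (pE l)" using xz_good[OF _ _ fl False] a by simp
      moreover have "teq x (downT l) = 0" "teq x (upT l) = 0" using eqAll flatL_valid[OF fl] by auto
      ultimately show ?thesis using pair_iff[OF fl] by blast
    qed
  qed
  have xb: "x e = 0" if "bordE n e" for e using X_inter xz that by blast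
  define d :: "nat \<times> nat \<Rightarrow> real" where "d = (\<lambda>(p,q). if p+q \<le> n then (\<Sum>i<p. x (0,i,q)) else 0)"
  have D0: "d (p+1,q) - d (p,q) = x (0,p,q)" if "p+q+1 \<le> n" for p q
    using that unfolding d_def by simp
  have D1: "p+q+1 \<le> n \<Longrightarrow> d (p,q+1) - d (p,q) = x (1,p,q)" for p q
  proof (induction p)
    case 0
    then show ?case using xb[of "(1,0,q)"] unfolding d_def by simp
  next
    case (Suc p)
    then have IH: "d (p,q+1) - d (p,q) = x (1,p,q)" by simp
    have a: "d (p+1,q+1) - d (p,q+1) = x (0,p,q+1)" using D0[of p "q+1"] Suc.prems by simp
    have b: "d (p+1,q) - d (p,q) = x (0,p,q)" using D0[of p q] Suc.prems by simp
    have "Up p q \<in> small_triangles n" "Down p q \<in> small_triangles n"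
      using Suc.prems unfolding small_triangles_def by auto
    then have "teq x (Up p q) = 0" "teq x (Down p q) = 0" using eqAll by blast+
    then have "x (0,p,q) - x (1,p,q) + x (2,p,q) = 0" "x (0,p,q+1) - x (1,p+1,q) + x (2,p,q) = 0"
      unfolding teq_Up teq_Down by simp_all
    then show ?case using IH a b by simp
  qed
  have Dall: "diffE d e = x e" if "validE n e" for e
  proof -
    obtain k p q where e: "e = (k,p,q)" by (cases e)
    have pq: "p+q+1 \<le> n" "k < 3" using that e by auto
    have "Up p q \<in> small_triangles n" using pq unfolding small_triangles_def by auto
    then have "teq x (Up p q) = 0" using eqAll by blast
    then have "x (0,p,q) - x (1,p,q) + x (2,p,q) = 0" unfolding teq_Up by simp
    then show ?thesis using e pq D0[OF pq(1)] D1[OF pq(1)] by (auto dest!: k3)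
  qed
  have dbord_diag: "\<forall>p. p + q = n \<longrightarrow> d (p,q) = 0" for q
  proof (induction q)
    case 0
    then show ?case using xb unfolding d_def by simp
  next
    case (Suc q)
    show ?case
    proof (intro allI impI)
      fix p assume pq: "p + Suc q = n"
      have "validE n (2,p,q)" using pq by simp
      then have "diffE d (2,p,q) = x (2,p,q)" by (rule Dall)
      moreover have "x (2,p,q) = 0" using xb pq by simp
      moreover have "d (p+1,q) = 0" using Suc.IH pq by simp
      ultimately show "d (p, Suc q) = 0" by simp
    qed
  qed
  have dz: "\<forall>v. v \<notin> hive_vertices n \<or> v \<in> border n \<longrightarrow> d v = 0"
  proof (intro allI impI)
    fix v assume v: "v \<notin> hive_vertices n \<or> v \<in> border n"
    obtain p q where vpq: "v = (p,q)" by (cases v)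
    show "d v = 0"
    proof (cases "p + q \<le> n")
      case False then show ?thesis unfolding vpq d_def by simp
    next
      case True
      then have "p = 0 \<or> q = 0 \<or> p + q = n" using v vpq unfolding hive_vertices_def border_def by auto
      then show ?thesis using dbord_diag[of q] xb True unfolding vpq d_def by auto
    qed
  qed
  have df: "\<forall>p q k. p+q+2 \<le> n \<longrightarrow> k < 3 \<longrightarrow> rf k p q h = 0 \<longrightarrow> rf k p q d = 0"
  proof (intro allI impI)
    fix p q k assume a: "p+q+2 \<le> n" "k < (3::nat)" "rf k p q h = 0"
    then have fl: "flatL n h (p,q,k)" by simp
    have "rf k p q d = diffE d (pA (p,q,k)) - diffE d (pB (p,q,k))" by (rule rf_pair[OF fl refl])
    also have "\<dots> = x (pA (p,q,k)) - x (pB (p,q,k))" using Dall l_valid[OF fl] by simp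
    also have "\<dots> = 0" using eqL[OF fl] by simp
    finally show "rf k p q d = 0" .
  qed
  have "d = (\<lambda>_. 0)" using rig dz df by blast
  moreover obtain e where e: "e \<in> X" "x e \<noteq> 0" using xnz by blast
  moreover have "diffE d e = x e" using Dall X_inter e by blast
  ultimately show False by (cases e) (auto split: if_splits)
qed

lemma inM: "p + q \<le> n \<Longrightarrow> h (p,q) \<in> Mset n h"
proof (induction p)
  case 0
  then show ?case by (intro M_border) (auto simp: border_def)
next
  case (Suc p)
  then have "h (p,q) \<in> Mset n h" by simp
  moreover have "diffE h (0,p,q) \<in> Mset n h" using no_bad[of "(0,p,q)"] Suc.prems unfolding bad_def by simp
  ultimately have "h (p,q) + diffE h (0,p,q) \<in> Mset n h" by (rule M_add)
  then show ?case by simp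
qed

end

lemma core_intro:
  assumes ext: "extreme_pt h (hive_polytope n h)"
    and cardc: "\<forall>F \<in> flatspaces n h. card F = 1 \<or> card F = 2"
  shows "core n h"
proof
  fix d :: "nat \<times> nat \<Rightarrow> real"
  assume "\<forall>v. v \<notin> hive_vertices n \<or> v \<in> border n \<longrightarrow> d v = 0"
    and "\<forall>p q k. p+q+2 \<le> n \<longrightarrow> k < 3 \<longrightarrow> rf k p q h = 0 \<longrightarrow> rf k p q d = 0"
  then show "d = (\<lambda>_. 0)" by (rule rigid[OF ext])
next
  fix l l'
  assume "flatL n h l" "flatL n h l'" "downT l = downT l' \<or> upT l = upT l'"
  then show "l = l'" by (rule small_from_card[OF cardc])
qed

theorem proposition3p2:
  fixes n :: nat and h :: "nat \<times> nat \<Rightarrow> real"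
  assumes "n \<ge> 1"
    and "extreme_pt h (hive_polytope n h)"
    and "\<forall>F \<in> flatspaces n h. card F = 1 \<or> card F = 2"
  shows "\<forall>v \<in> hive_vertices n. \<exists>c :: nat \<times> nat \<Rightarrow> int.
           h v = (\<Sum>b \<in> border n. of_int (c b) * h b)"
proof
  interpret core n h by (rule core_intro[OF assms(2,3)])
  fix v assume "v \<in> hive_vertices n"
  then obtain p q where v: "v = (p,q)" "p + q \<le> n" unfolding hive_vertices_def by auto
  then have "h v \<in> Mset n h" using inM by simp
  then show "\<exists>c :: nat \<times> nat \<Rightarrow> int. h v = (\<Sum>b \<in> border n. of_int (c b) * h b)"
    unfolding Mset_def by blast
qed

end
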